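(* Let $W$ be a kernel walk and $T(W)$ its induced tree, viewed as a rooted plane tree (rooted at the first vertex of $W$, with the children of each vertex ordered according to the order in which the walk first traverses the corresponding edges). Then (a) every leaf of $T(W)$ is incident to an excess edge, and (b) every inner vertex of $T(W)$ has outdegree at least two or is incident to an excess edge. Conversely, every rooted plane tree whose edges are colored 'simple' or 'excess' and which satisfies (a) and (b) appears (with its plane structure and edge coloring) as the induced tree of some kernel walk.
   Context: A tree walk of size $m$ and length $L$ is a sequence $W=(v_1,\dots,v_L)$ of elements of $[m]$ in which every element of $[m]$ occurs, such that the graph $T(W)$ with vertex set $[m]$ and edges $\{v_j,v_{j+1}\}$ ($1\le j<L$) and $\{v_L,v_1\}$ is a tree (the induced tree); $W$ is regarded as the closed walk $v_1\to\dots\to v_L\to v_1$, and $v_1$ is the root. If the root has degree $1$ it is also considered a leaf. The outdegree of a vertex is its number of children. An edge of $T(W)$ is simple if the closed walk traverses it exactly twice, and an excess edge otherwise (it is then traversed $2k\ge4$ times). A kernel walk is a tree walk $W$ such that: (i) no leaf of $T(W)$ other than the root is incident to a simple edge; (ii) if the root is a leaf, its incident edge is an excess edge; (iii) no non-root vertex of $T(W)$ has degree exactly $2$ with both of its incident edges simple. *)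

theory Defs
  imports Main
begin

text \<open>A walk is a nonempty list W = [v_1,...,v_L] of naturals, read as the closed
walk v_1 -> ... -> v_L -> v_1. Step j (for j < L) traverses the edge
{W!j, W!((j+1) mod L)}.\<close>

definition wstep :: "nat list \<Rightarrow> nat \<Rightarrow> nat set" where
  "wstep W j = {W ! j, W ! (Suc j mod length W)}"

definition walk_edges :: "nat list \<Rightarrow> nat set set" where
  "walk_edges W = {wstep W j | j. j < length W}"

definition trav_count :: "nat list \<Rightarrow> nat set \<Rightarrow> nat" where
  "trav_count W e = card {j. j < length W \<and> wstep W j = e}"

definition simple_edge :: "nat list \<Rightarrow> nat set \<Rightarrow> bool" where
  "simple_edge W e \<longleftrightarrow> e \<in> walk_edges W \<and> trav_count W e = 2"

definition excess_edge :: "nat list \<Rightarrow> nat set \<Rightarrow> bool" where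
  "excess_edge W e \<longleftrightarrow> e \<in> walk_edges W \<and> trav_count W e \<noteq> 2"

definition first_trav :: "nat list \<Rightarrow> nat set \<Rightarrow> nat" where
  "first_trav W e = (LEAST j. j < length W \<and> wstep W j = e)"

definition is_tree :: "'a set \<Rightarrow> 'a set set \<Rightarrow> bool" where
  "is_tree V E \<longleftrightarrow>
     finite V \<and> V \<noteq> {} \<and>
     (\<forall>e\<in>E. \<exists>u v. e = {u, v} \<and> u \<noteq> v \<and> u \<in> V \<and> v \<in> V) \<and>
     (\<forall>u\<in>V. \<forall>v\<in>V. (u, v) \<in> {(x, y). {x, y} \<in> E}\<^sup>*) \<and>
     \<not> (\<exists>cs. 3 \<le> length cs \<and> distinct cs \<and>
            (\<forall>i < length cs. {cs ! i, cs ! (Suc i mod length cs)} \<in> E))"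

definition tdeg :: "'a set set \<Rightarrow> 'a \<Rightarrow> nat" where
  "tdeg E v = card {e \<in> E. v \<in> e}"

definition tree_walk :: "nat \<Rightarrow> nat list \<Rightarrow> bool" where
  "tree_walk m W \<longleftrightarrow> W \<noteq> [] \<and> set W = {1..m} \<and> is_tree {1..m} (walk_edges W)"

text \<open>The root is hd W; a leaf is a vertex of degree 1 (this includes the root
when it has degree 1).\<close>
definition wleaf :: "nat list \<Rightarrow> nat \<Rightarrow> bool" where
  "wleaf W v \<longleftrightarrow> v \<in> set W \<and> tdeg (walk_edges W) v = 1"

definition kernel_walk :: "nat \<Rightarrow> nat list \<Rightarrow> bool" where
  "kernel_walk m W \<longleftrightarrow> tree_walk m W \<and>
     (\<forall>v\<in>set W. v \<noteq> hd W \<and> wleaf W v \<longrightarrow>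
        \<not> (\<exists>e\<in>walk_edges W. v \<in> e \<and> simple_edge W e)) \<and>
     (wleaf W (hd W) \<longrightarrow> (\<forall>e\<in>walk_edges W. hd W \<in> e \<longrightarrow> excess_edge W e)) \<and>
     (\<forall>v\<in>set W. v \<noteq> hd W \<and> tdeg (walk_edges W) v = 2 \<longrightarrow>
        \<not> (\<forall>e\<in>walk_edges W. v \<in> e \<longrightarrow> simple_edge W e))"

definition woutdeg :: "nat list \<Rightarrow> nat \<Rightarrow> nat" where
  "woutdeg W v = (if v = hd W then tdeg (walk_edges W) v else tdeg (walk_edges W) v - 1)"

text \<open>A (vertex-labelled) rooted plane tree: a node has a label and an ordered list
of children; each child comes with the colour of the edge to it
(True = excess, False = simple).\<close>

datatype 'a ltree = LNode (lab: 'a) (kids: "(bool \<times> 'a ltree) list")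

type_synonym ptree = "unit ltree"

definition erase :: "'a ltree \<Rightarrow> ptree" where
  "erase t = map_ltree (\<lambda>_. ()) t"

fun labels :: "'a ltree \<Rightarrow> 'a list" where
  "labels (LNode a cs) = a # concat (map (\<lambda>p. labels (snd p)) cs)"

inductive_set subtrees :: "'a ltree \<Rightarrow> 'a ltree set" for t where
  self: "t \<in> subtrees t"
| kid: "s \<in> subtrees t \<Longrightarrow> p \<in> set (kids s) \<Longrightarrow> snd p \<in> subtrees t"

definition ledges :: "'a ltree \<Rightarrow> ('a \<times> bool \<times> 'a) set" where
  "ledges t = {(lab s, fst p, lab (snd p)) | s p. s \<in> subtrees t \<and> p \<in> set (kids s)}"

text \<open>Conditions (a) and (b) on a coloured rooted plane tree.
 sub_ok c t: t is a non-root subtree whose edge to its parent has colour c.\<close>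
fun sub_ok :: "bool \<Rightarrow> 'a ltree \<Rightarrow> bool" where
  "sub_ok c (LNode a cs) =
     ((if cs = [] then c
       else 2 \<le> length cs \<or> c \<or> (\<exists>p\<in>set cs. fst p))
      \<and> (\<forall>p\<in>set cs. sub_ok (fst p) (snd p)))"

fun ptree_ok :: "'a ltree \<Rightarrow> bool" where
  "ptree_ok (LNode a cs) =
     ((if length cs = 1 then fst (hd cs)
       else 2 \<le> length cs \<or> (\<exists>p\<in>set cs. fst p))
      \<and> (\<forall>p\<in>set cs. sub_ok (fst p) (snd p)))"

text \<open>The walk W realizes the labelled plane tree lt: lt is T(W) rooted at the first
vertex, with edge colours given by simple/excess and children ordered by first
traversal.\<close>
definition realizes :: "nat list \<Rightarrow> nat ltree \<Rightarrow> bool" where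
  "realizes W lt \<longleftrightarrow>
     lab lt = hd W \<and> distinct (labels lt) \<and> set (labels lt) = set W \<and>
     {{x, y} | x b y. (x, b, y) \<in> ledges lt} = walk_edges W \<and>
     (\<forall>(x, b, y) \<in> ledges lt. b \<longleftrightarrow> excess_edge W {x, y}) \<and>
     (\<forall>s\<in>subtrees lt.
        sorted_wrt (<) (map (\<lambda>p. first_trav W {lab s, lab (snd p)}) (kids s)))"

end

theory Submission
  imports Defs
begin
fun relab :: "nat \<Rightarrow> 'a ltree \<Rightarrow> nat ltree" and relabs :: "nat \<Rightarrow> (bool \<times> 'a ltree) list \<Rightarrow> (bool \<times> nat ltree) list" where
 "relab n (LNode a cs) = LNode n (relabs (Suc n) cs)"
| "relabs n [] = []"
| "relabs n (p # ps) = (fst p, relab n (snd p)) # relabs (n + length (labels (snd p))) ps"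
fun T :: "nat ltree \<Rightarrow> nat list" where
 "T (LNode a cs) = a # concat (map (\<lambda>p. T (snd p) @ (if fst p then [a, lab (snd p), a] else [a])) cs)"
fun E :: "nat ltree \<Rightarrow> nat set list" where
 "E (LNode a cs) = concat (map (\<lambda>p. {a, lab (snd p)} # E (snd p) @ (if fst p then [{a, lab (snd p)}, {a, lab (snd p)}, {a, lab (snd p)}] else [{a, lab (snd p)}])) cs)"
fun LE :: "'a ltree \<Rightarrow> ('a \<times> bool \<times> 'a) set" where
 "LE (LNode a cs) = (\<Union>p\<in>set cs. insert (a, fst p, lab (snd p)) (LE (snd p)))"
fun KS :: "'a ltree \<Rightarrow> (bool \<times> 'a ltree) set" where
 "KS (LNode a cs) = (\<Union>p\<in>set cs. insert p (KS (snd p)))"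
fun mono_t :: "nat ltree \<Rightarrow> bool" where
 "mono_t (LNode a cs) = (\<forall>p\<in>set cs. a < lab (snd p) \<and> mono_t (snd p))"
fun pairs :: "'a list \<Rightarrow> 'a set list" where
 "pairs (x # y # zs) = {x, y} # pairs (y # zs)" | "pairs _ = []"

lemma ltree_ind[case_names LNode]:
  assumes "\<And>a cs. (\<And>p. p \<in> set cs \<Longrightarrow> P (snd p)) \<Longrightarrow> P (LNode a cs)"
  shows "P t"
proof (induction t rule: ltree.induct)
  case (LNode x1a x2a)
  show ?case
    by (rule assms) (metis LNode prod.collapse snds.intros)
qed

lemma relab_labels:
  "labels (relab n (t::'a ltree)) = [n..<n + length (labels t)]"
  "concat (map (\<lambda>p. labels (snd p)) (relabs n (cs::(bool \<times> 'a ltree) list))) = [n..<n + length (concat (map (\<lambda>p. labels (snd p)) cs))]"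
proof (induction n t and n cs rule: relab_relabs.induct)
  case (1 n a cs)
  let ?L = "length (concat (map (\<lambda>p. labels (snd p)) cs))"
  have e1: "labels (relab n (LNode a cs)) = n # [Suc n..<Suc n + ?L]"
    using 1 by (simp del: upt_Suc)
  have e2: "n # [Suc n..<Suc n + ?L] = [n..<n + Suc ?L]"
    by (simp del: upt_Suc add: upt_conv_Cons)
  have e3: "length (labels (LNode a cs)) = Suc ?L" by simp
  show ?case unfolding e1 e2 e3 ..
next
  case (2 n)
  then show ?case by simp
next
  case (3 n p ps)
  let ?l = "length (labels (snd p))"
  let ?L = "length (concat (map (\<lambda>p. labels (snd p)) ps))"
  have e1: "[n..<n + ?l + ?L] = [n..<n + ?l] @ [n + ?l..<n + ?l + ?L]"
    by (rule upt_add_eq_append) simp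
  have e2: "concat (map (\<lambda>p. labels (snd p)) (relabs n (p # ps))) = [n..<n + ?l] @ [n + ?l..<n + ?l + ?L]"
    using 3 by (simp del: upt_Suc)
  have e3: "n + length (concat (map (\<lambda>p. labels (snd p)) (p # ps))) = n + ?l + ?L" by simp
  show ?case unfolding e2 e3 e1 ..
qed

lemma relab_erase:
  "map_ltree (\<lambda>_. ()) (relab n (t::'a ltree)) = map_ltree (\<lambda>_. ()) t"
  "map (map_prod id (map_ltree (\<lambda>_. ()))) (relabs n (cs::(bool \<times> 'a ltree) list)) = map (map_prod id (map_ltree (\<lambda>_. ()))) cs"
proof (induction n t and n cs rule: relab_relabs.induct)
  case (3 n p ps)
  then show ?case by (cases p) simp
qed (simp_all add: id_def)

lemma relab_lab: "lab (relab n t) = n"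
  by (cases t) auto

lemma relabs_ge: "p \<in> set (relabs n cs) \<Longrightarrow> n \<le> lab (snd p)"
proof (induction cs arbitrary: n)
  case Nil then show ?case by simp
next
  case (Cons q qs)
  then have "p = (fst q, relab n (snd q)) \<or> p \<in> set (relabs (n + length (labels (snd q))) qs)" by simp
  then show ?case
  proof
    assume "p = (fst q, relab n (snd q))" then show ?thesis by (simp add: relab_lab)
  next
    assume "p \<in> set (relabs (n + length (labels (snd q))) qs)"
    then have "n + length (labels (snd q)) \<le> lab (snd p)" by (rule Cons.IH)
    then show ?thesis by simp
  qed
qed

lemma relab_mono:
  "mono_t (relab n (t::'a ltree))"
  "\<forall>p\<in>set (relabs n (cs::(bool \<times> 'a ltree) list)). mono_t (snd p)"
proof (induction n t and n cs rule: relab_relabs.induct)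
  case (1 n a cs)
  have "\<forall>p\<in>set (relabs (Suc n) cs). n < lab (snd p)"
    using relabs_ge[of _ "Suc n" cs] by (simp add: Suc_le_eq)
  then show ?case using 1 by simp
next
  case (2 n)
  then show ?case by simp
next
  case (3 n p ps)
  then show ?case by simp
qed


definition blk :: "nat \<Rightarrow> bool \<times> nat ltree \<Rightarrow> nat set list" where
  "blk a p = {a, lab (snd p)} # E (snd p) @ (if fst p then [{a, lab (snd p)}, {a, lab (snd p)}, {a, lab (snd p)}] else [{a, lab (snd p)}])"

lemma E_blk: "E (LNode a cs) = concat (map (blk a) cs)"
  by (simp add: blk_def[abs_def])

lemma lab_in_labels[simp]: "lab t \<in> set (labels t)"
  by (cases t) simp

lemma set_blk: "set (blk a p) = insert {a, lab (snd p)} (set (E (snd p)))"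
  by (auto simp: blk_def)

lemma T_props: "T t \<noteq> [] \<and> hd (T t) = lab t \<and> last (T t) = lab t"
proof (induction t rule: ltree_ind)
  case (LNode a cs)
  have "last (a # concat (map (\<lambda>p. T (snd p) @ (if fst p then [a, lab (snd p), a] else [a])) cs)) = a"
    by (induction cs rule: rev_induct) auto
  then show ?case by simp
qed

lemma pairs_Cons: "pairs (a # xs) = (if xs = [] then [] else {a, hd xs} # pairs xs)"
  by (cases xs) auto

lemma pairs_append: "xs \<noteq> [] \<Longrightarrow> pairs (xs @ ys) = pairs xs @ pairs (last xs # ys)"
proof (induction xs rule: pairs.induct)
  case (1 x y zs)
  then show ?case by simp
next
  case ("2_1")
  then show ?case by simp
next
  case ("2_2" v)
  then show ?case by (simp add: pairs_Cons)
qed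

lemma pairs_T: "pairs (T t) = E t"
proof (induction t rule: ltree_ind)
  case (LNode a cs)
  have "pairs (a # concat (map (\<lambda>p. T (snd p) @ (if fst p then [a, lab (snd p), a] else [a])) cs))
        = concat (map (blk a) cs)"
    using LNode
  proof (induction cs)
    case Nil
    then show ?case by simp
  next
    case (Cons p ps)
    let ?s = "T (snd p) @ (if fst p then [a, lab (snd p), a] else [a])"
    let ?r = "concat (map (\<lambda>p. T (snd p) @ (if fst p then [a, lab (snd p), a] else [a])) ps)"
    have ne: "T (snd p) \<noteq> []" "hd (T (snd p)) = lab (snd p)" "last (T (snd p)) = lab (snd p)"
      using T_props by auto
    have l: "last (a # ?s) = a" by simp
    have "pairs (a # concat (map (\<lambda>p. T (snd p) @ (if fst p then [a, lab (snd p), a] else [a])) (p # ps)))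
        = pairs ((a # ?s) @ ?r)" by simp
    also have "\<dots> = pairs (a # ?s) @ pairs (a # ?r)"
      by (subst pairs_append) (simp_all only: l, simp)
    also have "pairs (a # ?s) = blk a p"
      using ne Cons.prems[of p] by (simp add: pairs_Cons pairs_append blk_def insert_commute)
    also have "pairs (a # ?r) = concat (map (blk a) ps)"
      using Cons by simp
    finally show ?case by simp
  qed
  then show ?case by (simp only: T.simps E_blk)
qed

lemma set_T: "set (T t) = set (labels t)"
  by (induction t rule: ltree_ind) (auto split: if_splits)

lemma LE_labels: "(x, b, y) \<in> LE t \<Longrightarrow> x \<in> set (labels t) \<and> y \<in> set (labels t)"
proof (induction t rule: ltree_ind)
  case (LNode a cs)
  then show ?case by fastforce
qed


declare E.simps[simp del]

lemma distinct_concat_map_disj: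
  "distinct (concat (map f xs)) \<Longrightarrow> p \<in> set xs \<Longrightarrow> q \<in> set xs \<Longrightarrow> p \<noteq> q \<Longrightarrow> set (f p) \<inter> set (f q) = {}"
  by (induction xs) auto

lemma dist_child:
  assumes "distinct (labels (LNode a cs))" "p \<in> set cs"
  shows "distinct (labels (snd p)) \<and> a \<notin> set (labels (snd p))"
proof -
  obtain xs ys where "cs = xs @ p # ys" using assms(2) by (meson split_list)
  then show ?thesis using assms(1) by auto
qed

lemma dist_same:
  assumes "distinct (labels (LNode a cs))" "p \<in> set cs" "q \<in> set cs"
    "v \<in> set (labels (snd p))" "v \<in> set (labels (snd q))"
  shows "p = q"
  using distinct_concat_map_disj[of "\<lambda>p. labels (snd p)" cs p q] assms by auto

lemma set_E: "set (E t) = (\<lambda>(x, b, y). {x, y}) ` LE t"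
proof (induction t rule: ltree_ind)
  case (LNode a cs)
  then show ?case by (auto simp: E_blk set_blk)
qed

lemma E_sub: "e \<in> set (E t) \<Longrightarrow> e \<subseteq> set (labels t) \<and> e \<noteq> {}"
  using LE_labels by (fastforce simp: set_E)

lemma LE_neq: "distinct (labels t) \<Longrightarrow> (x, b, y) \<in> LE t \<Longrightarrow> y \<noteq> lab t"
proof (induction t rule: ltree_ind)
  case (LNode a cs)
  then obtain p where p: "p \<in> set cs" "(x, b, y) = (a, fst p, lab (snd p)) \<or> (x, b, y) \<in> LE (snd p)"
    by auto
  have "y \<in> set (labels (snd p))" using p LE_labels[of x b y "snd p"] by auto
  then show ?case using dist_child[OF LNode.prems(1) p(1)] by auto
qed

lemma LE_unique:
  "distinct (labels t) \<Longrightarrow> (x, b, y) \<in> LE t \<Longrightarrow> (x', b', y) \<in> LE t \<Longrightarrow> x = x' \<and> b = b'"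
proof (induction t rule: ltree_ind)
  case (LNode a cs)
  from LNode.prems(2) obtain p where p: "p \<in> set cs" "(x, b, y) = (a, fst p, lab (snd p)) \<or> (x, b, y) \<in> LE (snd p)"
    by auto
  from LNode.prems(3) obtain q where q: "q \<in> set cs" "(x', b', y) = (a, fst q, lab (snd q)) \<or> (x', b', y) \<in> LE (snd q)"
    by auto
  have yp: "y \<in> set (labels (snd p))" using p LE_labels[of x b y "snd p"] by auto
  have yq: "y \<in> set (labels (snd q))" using q LE_labels[of x' b' y "snd q"] by auto
  have pq: "p = q" using dist_same[OF LNode.prems(1) p(1) q(1) yp yq] .
  have d: "distinct (labels (snd p))" using dist_child[OF LNode.prems(1) p(1)] by auto
  show ?case
    using p q pq LNode.IH[OF p(1) d] LE_neq[OF d] by auto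
qed

lemma LE_mono: "mono_t t \<Longrightarrow> (x, b, y) \<in> LE t \<Longrightarrow> x < y"
  by (induction t rule: ltree_ind) auto

lemma count_LE:
  "distinct (labels t) \<Longrightarrow> (x, b, y) \<in> LE t \<Longrightarrow>
     length (filter (\<lambda>e. e = {x, y}) (E t)) = (if b then 4 else 2)"
proof (induction t rule: ltree_ind)
  case (LNode a cs)
  from LNode.prems(2) obtain p where p: "p \<in> set cs" "(x, b, y) = (a, fst p, lab (snd p)) \<or> (x, b, y) \<in> LE (snd p)"
    by auto
  obtain xs ys where cs: "cs = xs @ p # ys" using p(1) by (meson split_list)
  have dp: "distinct (labels (snd p))" "a \<notin> set (labels (snd p))"
    using dist_child[OF LNode.prems(1) p(1)] by auto
  have yp: "y \<in> set (labels (snd p))" using p LE_labels[of x b y "snd p"] by auto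
  have xp: "x = a \<or> x \<in> set (labels (snd p))" using p LE_labels[of x b y "snd p"] by auto
  have disj: "set (labels (snd q)) \<inter> set (labels (snd p)) = {}" if "q \<in> set xs \<or> q \<in> set ys" for q
    using LNode.prems(1) that unfolding cs by auto
  have notin: "{x, y} \<notin> set (blk a q)" if "q \<in> set xs \<or> q \<in> set ys" for q
  proof
    assume "{x, y} \<in> set (blk a q)"
    then have "{x, y} = {a, lab (snd q)} \<or> {x, y} \<in> set (E (snd q))" by (simp add: set_blk)
    then show False
    proof
      assume "{x, y} = {a, lab (snd q)}"
      then have "y = a \<or> y = lab (snd q)" by auto
      then show False using yp dp disj[OF that] lab_in_labels[of "snd q"] by blast
    next
      assume "{x, y} \<in> set (E (snd q))"
      then have "y \<in> set (labels (snd q))" using E_sub by blast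
      then show False using yp disj[OF that] by auto
    qed
  qed
  have f1: "filter (\<lambda>e. e = {x, y}) (concat (map (blk a) xs)) = []"
    using notin by (auto simp: filter_empty_conv)
  have f2: "filter (\<lambda>e. e = {x, y}) (concat (map (blk a) ys)) = []"
    using notin by (auto simp: filter_empty_conv)
  have "length (filter (\<lambda>e. e = {x, y}) (E (LNode a cs))) = length (filter (\<lambda>e. e = {x, y}) (blk a p))"
    unfolding E_blk cs using f1 f2 by simp
  also have "\<dots> = (if b then 4 else 2)"
    using p(2)
  proof
    assume h: "(x, b, y) = (a, fst p, lab (snd p))"
    have "{a, lab (snd p)} \<notin> set (E (snd p))" using E_sub dp by blast
    then have "filter (\<lambda>e. e = {a, lab (snd p)}) (E (snd p)) = []" by (auto simp: filter_empty_conv)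
    then show ?thesis using h by (auto simp: blk_def)
  next
    assume h: "(x, b, y) \<in> LE (snd p)"
    have "{x, y} \<noteq> {a, lab (snd p)}"
      using LE_labels[OF h] dp by auto
    then have "length (filter (\<lambda>e. e = {x, y}) (blk a p)) = length (filter (\<lambda>e. e = {x, y}) (E (snd p)))"
      by (auto simp: blk_def)
    then show ?thesis using LNode.IH[OF p(1) dp(1) h] by simp
  qed
  finally show ?case .
qed


definition fidx :: "'a list \<Rightarrow> 'a \<Rightarrow> nat" where
  "fidx xs e = (LEAST j. j < length xs \<and> xs ! j = e)"

lemma fidx_hit: "e \<notin> set xs \<Longrightarrow> fidx (xs @ e # ys) e = length xs"
  unfolding fidx_def
proof (rule Least_equality)
  show "length xs < length (xs @ e # ys) \<and> (xs @ e # ys) ! length xs = e" by simp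
next
  fix y assume "e \<notin> set xs" "y < length (xs @ e # ys) \<and> (xs @ e # ys) ! y = e"
  then show "length xs \<le> y" by (metis leI nth_append nth_mem)
qed

lemma fidx_ge: "e \<notin> set xs \<Longrightarrow> e \<in> set ys \<Longrightarrow> length xs \<le> fidx (xs @ ys) e"
proof -
  assume a: "e \<notin> set xs" "e \<in> set ys"
  have ex: "\<exists>j. j < length (xs @ ys) \<and> (xs @ ys) ! j = e"
    using a(2) by (metis in_set_conv_nth in_set_conv_nth[of e "xs @ ys"] set_append UnCI)
  have "fidx (xs @ ys) e < length (xs @ ys) \<and> (xs @ ys) ! fidx (xs @ ys) e = e"
    unfolding fidx_def by (rule LeastI_ex[OF ex])
  then show ?thesis using a(1) by (metis leI nth_append nth_mem)
qed

lemma dbl_same: "{a, x} = {a, y} \<Longrightarrow> x = y"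
  by (auto simp: doubleton_eq_iff)

lemma sort_kids:
  assumes "distinct (concat (map (\<lambda>p. labels (snd p)) cs))" "\<forall>p\<in>set cs. a \<notin> set (labels (snd p))"
    "\<forall>p\<in>set cs. {a, lab (snd p)} \<notin> set P"
  shows "sorted_wrt (<) (map (\<lambda>p. fidx (P @ concat (map (blk a) cs) @ Q) {a, lab (snd p)}) cs)
     \<and> (\<forall>p\<in>set cs. length P \<le> fidx (P @ concat (map (blk a) cs) @ Q) {a, lab (snd p)})"
  using assms
proof (induction cs arbitrary: P)
  case Nil
  then show ?case by simp
next
  case (Cons p ps)
  define P' where "P' = P @ blk a p"
  have eq: "P @ concat (map (blk a) (p # ps)) @ Q = P' @ concat (map (blk a) ps) @ Q"
    by (simp add: P'_def)
  have h1: "fidx (P @ concat (map (blk a) (p # ps)) @ Q) {a, lab (snd p)} = length P"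
  proof -
    have e: "P @ concat (map (blk a) (p # ps)) @ Q = P @ {a, lab (snd p)} # (tl (blk a p) @ concat (map (blk a) ps) @ Q)"
      by (simp add: blk_def)
    have n: "{a, lab (snd p)} \<notin> set P" using Cons.prems(3) by simp
    show ?thesis unfolding e by (rule fidx_hit[OF n])
  qed
  have nq: "{a, lab (snd q)} \<notin> set P'" if q: "q \<in> set ps" for q
  proof
    assume "{a, lab (snd q)} \<in> set P'"
    then consider "{a, lab (snd q)} \<in> set P" | "{a, lab (snd q)} = {a, lab (snd p)}" | "{a, lab (snd q)} \<in> set (E (snd p))"
      by (simp add: P'_def set_blk, blast)
    then show False
    proof cases
      case 1
      then show False using Cons.prems(3) q by simp
    next
      case 3
      then have "a \<in> set (labels (snd p))" using E_sub by blast
      then show False using Cons.prems(2) by simp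
    next
      case 2
      then have h: "lab (snd q) = lab (snd p)" by (rule dbl_same)
      have s1: "set (labels (snd q)) \<subseteq> set (concat (map (\<lambda>p. labels (snd p)) ps))" using q by auto
      have "set (labels (snd p)) \<inter> set (concat (map (\<lambda>p. labels (snd p)) ps)) = {}"
        using Cons.prems(1) by (simp only: list.map concat.simps distinct_append)
      moreover have "lab (snd q) \<in> set (concat (map (\<lambda>p. labels (snd p)) ps))"
        using s1 lab_in_labels[of "snd q"] by (rule subsetD)
      moreover have "lab (snd q) \<in> set (labels (snd p))" using h lab_in_labels[of "snd p"] by simp
      ultimately show False by (metis IntI empty_iff)
    qed
  qed
  have d: "distinct (concat (map (\<lambda>p. labels (snd p)) ps))" using Cons.prems(1) by simp
  have a2: "\<forall>p\<in>set ps. a \<notin> set (labels (snd p))" using Cons.prems(2) by simp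
  have IH: "sorted_wrt (<) (map (\<lambda>p. fidx (P' @ concat (map (blk a) ps) @ Q) {a, lab (snd p)}) ps)
     \<and> (\<forall>q\<in>set ps. length P' \<le> fidx (P' @ concat (map (blk a) ps) @ Q) {a, lab (snd q)})"
  proof -
    have "\<forall>q\<in>set ps. {a, lab (snd q)} \<notin> set P'" using nq by blast
    then show ?thesis by (rule Cons.IH[OF d a2])
  qed
  have lP: "length P < length P'" by (simp add: P'_def blk_def)
  let ?f = "\<lambda>p. fidx (P' @ concat (map (blk a) ps) @ Q) {a, lab (snd p)}"
  have h1': "?f p = length P" using h1 unfolding eq .
  have A: "\<forall>q\<in>set ps. ?f p < ?f q"
  proof
    fix q assume "q \<in> set ps"
    then have "length P' \<le> ?f q" using IH by blast
    then show "?f p < ?f q" using h1' lP by linarith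
  qed
  have A': "\<forall>y\<in>set (map ?f ps). ?f p < y" using A by simp
  have S: "sorted_wrt (<) (map ?f ps)" using IH by blast
  have "sorted_wrt (<) (map ?f (p # ps))"
    unfolding list.map sorted_wrt.simps(2) using A' S by blast
  moreover have "\<forall>q\<in>set (p # ps). length P \<le> ?f q"
  proof
    fix q assume "q \<in> set (p # ps)"
    then have "q = p \<or> q \<in> set ps" by simp
    then show "length P \<le> ?f q"
    proof
      assume "q = p" then show ?thesis using h1' by simp
    next
      assume "q \<in> set ps"
      then have "length P' \<le> ?f q" using IH by blast
      then show ?thesis using lP by linarith
    qed
  qed
  ultimately show ?case unfolding eq by (rule conjI)
qed

lemma subtrees_LNode: "subtrees (LNode a cs) = insert (LNode a cs) (\<Union>p\<in>set cs. subtrees (snd p))"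
proof
  show "subtrees (LNode a cs) \<subseteq> insert (LNode a cs) (\<Union>p\<in>set cs. subtrees (snd p))"
  proof
    fix s assume "s \<in> subtrees (LNode a cs)"
    then show "s \<in> insert (LNode a cs) (\<Union>p\<in>set cs. subtrees (snd p))"
    proof (induction rule: subtrees.induct)
      case self
      then show ?case by simp
    next
      case (kid s p)
      then show ?case by (auto intro: subtrees.intros)
    qed
  qed
next
  have "s \<in> subtrees (LNode a cs)" if "s \<in> subtrees c" "q \<in> set cs" "c = snd q" for s c q
    using that
  proof (induction rule: subtrees.induct)
    case self
    then show ?case by (metis ltree.sel(2) subtrees.kid subtrees.self)
  next
    case (kid s p)
    then show ?case by (auto intro: subtrees.intros)
  qed
  then show "insert (LNode a cs) (\<Union>p\<in>set cs. subtrees (snd p)) \<subseteq> subtrees (LNode a cs)"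
    by (auto intro: subtrees.self)
qed

lemma sort_sub:
  "distinct (labels t) \<Longrightarrow> (\<forall>e\<in>set P. \<not> e \<subseteq> set (labels t)) \<Longrightarrow> s \<in> subtrees t \<Longrightarrow>
   sorted_wrt (<) (map (\<lambda>p. fidx (P @ E t @ Q) {lab s, lab (snd p)}) (kids s))"
proof (induction t arbitrary: P Q s rule: ltree_ind)
  case (LNode a cs)
  from LNode.prems(3) have "s = LNode a cs \<or> (\<exists>p\<in>set cs. s \<in> subtrees (snd p))"
    by (simp add: subtrees_LNode)
  then show ?case
  proof
    assume s: "s = LNode a cs"
    have "\<forall>p\<in>set cs. {a, lab (snd p)} \<notin> set P"
      using LNode.prems(2) lab_in_labels by fastforce
    then show ?thesis
      using sort_kids[of cs a P Q] LNode.prems(1) s by (simp add: E_blk)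
  next
    assume "\<exists>p\<in>set cs. s \<in> subtrees (snd p)"
    then obtain p where p: "p \<in> set cs" "s \<in> subtrees (snd p)" by blast
    obtain xs ys where cs: "cs = xs @ p # ys" using p(1) by (meson split_list)
    have dp: "distinct (labels (snd p))" "a \<notin> set (labels (snd p))"
      using dist_child[OF LNode.prems(1) p(1)] by auto
    define P' where "P' = P @ concat (map (blk a) xs) @ [{a, lab (snd p)}]"
    define Q' where "Q' = (if fst p then [{a, lab (snd p)}, {a, lab (snd p)}, {a, lab (snd p)}] else [{a, lab (snd p)}]) @ concat (map (blk a) ys) @ Q"
    have eq: "P @ E (LNode a cs) @ Q = P' @ E (snd p) @ Q'"
      by (simp add: E_blk cs P'_def Q'_def blk_def)
    have sub: "set (labels (snd p)) \<subseteq> set (labels (LNode a cs))" using p(1) by auto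
    have disj: "set (labels (snd q)) \<inter> set (labels (snd p)) = {}" if "q \<in> set xs" for q
      using LNode.prems(1) that unfolding cs by auto
    have "\<forall>e\<in>set P'. \<not> e \<subseteq> set (labels (snd p))"
    proof
      fix e assume "e \<in> set P'"
      then have "e \<in> set P \<or> e = {a, lab (snd p)} \<or> (\<exists>q\<in>set xs. e = {a, lab (snd q)} \<or> e \<in> set (E (snd q)))"
        by (auto simp: P'_def set_blk)
      then show "\<not> e \<subseteq> set (labels (snd p))"
      proof (elim disjE)
        assume "e \<in> set P" then show ?thesis using LNode.prems(2) sub by blast
      next
        assume "e = {a, lab (snd p)}" then show ?thesis using dp by auto
      next
        assume "\<exists>q\<in>set xs. e = {a, lab (snd q)} \<or> e \<in> set (E (snd q))"
        then obtain q where q: "q \<in> set xs" "e = {a, lab (snd q)} \<or> e \<in> set (E (snd q))" by blast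
        show ?thesis using q(2)
        proof
          assume "e = {a, lab (snd q)}" then show ?thesis using dp by auto
        next
          assume "e \<in> set (E (snd q))"
          then have "e \<subseteq> set (labels (snd q))" "e \<noteq> {}" using E_sub by auto
          then show ?thesis using disj[OF q(1)] by blast
        qed
      qed
    qed
    then show ?thesis using LNode.IH[OF p(1) dp(1) _ p(2), of P' Q'] unfolding eq by blast
  qed
qed

lemma LE_ledges: "LE t = ledges t"
proof (induction t rule: ltree_ind)
  case (LNode a cs)
  have "ledges (LNode a cs) = {(lab s, fst p, lab (snd p)) | s p. s = LNode a cs \<and> p \<in> set (kids s)} \<union> (\<Union>q\<in>set cs. ledges (snd q))"
    unfolding ledges_def subtrees_LNode by blast
  also have "{(lab s, fst p, lab (snd p)) | s p. s = LNode a cs \<and> p \<in> set (kids s)} = {(a, fst p, lab (snd p)) | p. p \<in> set cs}"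
    by auto
  finally have "ledges (LNode a cs) = {(a, fst p, lab (snd p)) | p. p \<in> set cs} \<union> (\<Union>q\<in>set cs. ledges (snd q))" .
  then show ?case using LNode by auto
qed

lemma KS_sub_ok: "sub_ok c t \<Longrightarrow> q \<in> KS t \<Longrightarrow> sub_ok (fst q) (snd q)"
  by (induction t arbitrary: c rule: ltree_ind) auto

lemma KS_ptree_ok: "ptree_ok t \<Longrightarrow> q \<in> KS t \<Longrightarrow> sub_ok (fst q) (snd q)"
  by (cases t) (auto intro: KS_sub_ok)

lemma KS_labels: "v \<in> set (labels t) \<Longrightarrow> v = lab t \<or> (\<exists>q\<in>KS t. lab (snd q) = v)"
  by (induction t rule: ltree_ind) fastforce

lemma KS_props: "q \<in> KS t \<Longrightarrow> (\<exists>x. (x, fst q, lab (snd q)) \<in> LE t) \<and> LE (snd q) \<subseteq> LE t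
   \<and> set (labels (snd q)) \<subseteq> set (labels t) \<and> (distinct (labels t) \<longrightarrow> distinct (labels (snd q)))"
proof (induction t rule: ltree_ind)
  case (LNode a cs)
  then obtain p where p: "p \<in> set cs" "q = p \<or> q \<in> KS (snd p)" by auto
  have d: "distinct (labels (LNode a cs)) \<Longrightarrow> distinct (labels (snd p))"
    using dist_child[of a cs p] p(1) by blast
  have s: "set (labels (snd p)) \<subseteq> set (labels (LNode a cs))" "LE (snd p) \<subseteq> LE (LNode a cs)"
    using p(1) by auto
  show ?case using p(2)
  proof
    assume "q = p" then show ?thesis using p(1) d s by auto
  next
    assume "q \<in> KS (snd p)"
    then show ?thesis using LNode.IH[OF p(1)] d s by blast
  qed
qed

lemma kid_LE: "p \<in> set (kids s) \<Longrightarrow> (lab s, fst p, lab (snd p)) \<in> LE s"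
  by (cases s) auto

lemma connected:
  "v \<in> set (labels t) \<Longrightarrow> (lab t, v) \<in> {(x, y). {x, y} \<in> set (E t)}\<^sup>*"
proof (induction t arbitrary: v rule: ltree_ind)
  case (LNode a cs)
  show ?case
  proof (cases "v = a")
    case True then show ?thesis by simp
  next
    case False
    then obtain p where p: "p \<in> set cs" "v \<in> set (labels (snd p))" using LNode.prems by auto
    have sE: "set (E (snd p)) \<subseteq> set (E (LNode a cs))" "{a, lab (snd p)} \<in> set (E (LNode a cs))"
      using p(1) by (auto simp: E_blk set_blk)
    have "(lab (snd p), v) \<in> {(x, y). {x, y} \<in> set (E (snd p))}\<^sup>*" using LNode.IH[OF p] .
    also have "\<dots> \<subseteq> {(x, y). {x, y} \<in> set (E (LNode a cs))}\<^sup>*"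
      by (rule rtrancl_mono) (use sE in auto)
    finally have "(lab (snd p), v) \<in> {(x, y). {x, y} \<in> set (E (LNode a cs))}\<^sup>*" .
    moreover have "(a, lab (snd p)) \<in> {(x, y). {x, y} \<in> set (E (LNode a cs))}" using sE by auto
    ultimately show ?thesis by (simp add: converse_rtrancl_into_rtrancl)
  qed
qed


lemma pairs_len: "length (pairs xs) = length xs - 1"
  by (induction xs rule: pairs.induct) auto

lemma pairs_nth: "Suc j < length xs \<Longrightarrow> pairs xs ! j = {xs ! j, xs ! Suc j}"
  by (induction xs arbitrary: j rule: pairs.induct) (auto simp: nth_Cons split: nat.splits)

lemma wstep_pairs:
  assumes "W \<noteq> []" "j < length W"
  shows "wstep W j = pairs (W @ [hd W]) ! j"
proof -
  have "pairs (W @ [hd W]) ! j = {(W @ [hd W]) ! j, (W @ [hd W]) ! Suc j}"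
    using assms by (simp add: pairs_nth)
  moreover have "(W @ [hd W]) ! j = W ! j" using assms by (simp add: nth_append)
  moreover have "(W @ [hd W]) ! Suc j = W ! (Suc j mod length W)"
  proof (cases "Suc j < length W")
    case True then show ?thesis by (simp add: nth_append)
  next
    case False
    then have "Suc j = length W" using assms by simp
    then show ?thesis using assms by (simp add: hd_conv_nth)
  qed
  ultimately show ?thesis by (simp add: wstep_def)
qed

lemma walk_facts:
  assumes "W \<noteq> []" "W @ [hd W] = xs"
  shows "walk_edges W = set (pairs xs)"
    "trav_count W e = length (filter (\<lambda>x. x = e) (pairs xs))"
    "first_trav W e = fidx (pairs xs) e"
proof -
  have len: "length (pairs xs) = length W" using assms by (auto simp: pairs_len)
  have ws: "\<And>j. j < length W \<Longrightarrow> wstep W j = pairs xs ! j" using wstep_pairs assms by blast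
  show "walk_edges W = set (pairs xs)"
    unfolding walk_edges_def using len ws by (auto simp: in_set_conv_nth) (metis ws)
  show "trav_count W e = length (filter (\<lambda>x. x = e) (pairs xs))"
    unfolding trav_count_def length_filter_conv_card len using ws by (metis (lifting))
  show "first_trav W e = fidx (pairs xs) e"
    unfolding first_trav_def fidx_def len using ws by (metis (lifting))
qed

lemma acyclic_lemma:
  fixes S :: "nat set set"
  assumes uniq: "\<And>x x' y. {x, y} \<in> S \<Longrightarrow> {x', y} \<in> S \<Longrightarrow> x < y \<Longrightarrow> x' < y \<Longrightarrow> x = x'"
  shows "\<not> (\<exists>cs. 3 \<le> length cs \<and> distinct cs \<and> (\<forall>i < length cs. {cs ! i, cs ! (Suc i mod length cs)} \<in> S))"
proof
  assume "\<exists>cs. 3 \<le> length cs \<and> distinct cs \<and> (\<forall>i < length cs. {cs ! i, cs ! (Suc i mod length cs)} \<in> S)"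
  then obtain cs where c: "3 \<le> length cs" "distinct cs" "\<forall>i < length cs. {cs ! i, cs ! (Suc i mod length cs)} \<in> S"
    by blast
  define n where "n = length cs"
  have ne: "cs \<noteq> []" using c by auto
  have "Max (set cs) \<in> set cs" using ne by simp
  then obtain i where i: "i < n" "cs ! i = Max (set cs)" by (metis in_set_conv_nth n_def)
  define j0 where "j0 = (if i = 0 then n - 1 else i - 1)"
  define j1 where "j1 = (if Suc i = n then 0 else Suc i)"
  have j0: "j0 < n" "Suc j0 mod n = i" "j0 \<noteq> i" using i c(1) unfolding j0_def n_def by auto
  have j1: "j1 < n" "Suc i mod n = j1" "j1 \<noteq> i" using i c(1) unfolding j1_def n_def by auto
  have j01: "j0 \<noteq> j1" using i c(1) unfolding j0_def j1_def n_def by auto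
  have e0: "{cs ! j0, cs ! i} \<in> S" using c(3) j0 n_def by metis
  have e1: "{cs ! i, cs ! j1} \<in> S" using c(3) i(1) j1 n_def by metis
  have d0: "cs ! j0 \<noteq> cs ! i" using c(2) j0 i(1) n_def by (simp add: nth_eq_iff_index_eq)
  have d1: "cs ! j1 \<noteq> cs ! i" using c(2) j1 i(1) n_def by (simp add: nth_eq_iff_index_eq)
  have "cs ! j0 \<le> cs ! i" "cs ! j1 \<le> cs ! i" using i(2) j0(1) j1(1) n_def by auto
  then have "cs ! j0 < cs ! i" "cs ! j1 < cs ! i" using d0 d1 by auto
  then have "cs ! j0 = cs ! j1" using uniq[of "cs ! j0" "cs ! i" "cs ! j1"] e0 e1 by (simp add: insert_commute)
  then show False using c(2) j0(1) j1(1) j01 n_def by (simp add: nth_eq_iff_index_eq)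
qed

lemma card_ge2: "finite A \<Longrightarrow> a \<in> A \<Longrightarrow> b \<in> A \<Longrightarrow> a \<noteq> b \<Longrightarrow> 2 \<le> card A"
  by (metis card_2_iff card_mono empty_subsetI insert_subset)

lemma card_ge3: "finite A \<Longrightarrow> a \<in> A \<Longrightarrow> b \<in> A \<Longrightarrow> c \<in> A \<Longrightarrow> a \<noteq> b \<Longrightarrow> a \<noteq> c \<Longrightarrow> b \<noteq> c \<Longrightarrow> 3 \<le> card A"
proof -
  assume a: "finite A" "a \<in> A" "b \<in> A" "c \<in> A" "a \<noteq> b" "a \<noteq> c" "b \<noteq> c"
  have "card {a, b, c} = 3" using a by auto
  moreover have "card {a, b, c} \<le> card A" using a by (intro card_mono) auto
  ultimately show ?thesis by simp
qed

lemma sub_ok_map: "sub_ok c (map_ltree f t) = sub_ok c t"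
  by (induction t arbitrary: c rule: ltree_ind) (auto simp: map_prod_def split_beta)

lemma ptree_ok_map: "ptree_ok (map_ltree f t) = ptree_ok t"
  by (cases t) (auto simp: map_prod_def split_beta sub_ok_map length_Suc_conv)


lemma walk_edges_finite: "finite (walk_edges W)"
proof -
  have "walk_edges W = wstep W ` {..<length W}" by (auto simp: walk_edges_def)
  then show ?thesis by simp
qed

lemma incident_exists: "v \<in> set W \<Longrightarrow> \<exists>e\<in>walk_edges W. v \<in> e"
proof -
  assume "v \<in> set W"
  then obtain j where "j < length W" "W ! j = v" by (metis in_set_conv_nth)
  then show ?thesis by (auto simp: walk_edges_def wstep_def)
qed

lemma tdeg_pos: "v \<in> set W \<Longrightarrow> 1 \<le> tdeg (walk_edges W) v"
proof -
  assume "v \<in> set W"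
  then obtain e where "e \<in> walk_edges W" "v \<in> e" using incident_exists by blast
  then have "{e \<in> walk_edges W. v \<in> e} \<noteq> {}" by blast
  moreover have "finite {e \<in> walk_edges W. v \<in> e}" using walk_edges_finite by simp
  ultimately show ?thesis unfolding tdeg_def by (simp add: Suc_leI card_gt_0_iff)
qed

lemma part1:
  assumes k: "kernel_walk m W" and v: "v \<in> set W"
  shows "(wleaf W v \<longrightarrow> (\<exists>e\<in>walk_edges W. v \<in> e \<and> excess_edge W e)) \<and>
         (\<not> wleaf W v \<longrightarrow> 2 \<le> woutdeg W v \<or> (\<exists>e\<in>walk_edges W. v \<in> e \<and> excess_edge W e))"
proof -
  have ns: "\<And>e. e \<in> walk_edges W \<Longrightarrow> \<not> simple_edge W e \<Longrightarrow> excess_edge W e"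
    by (simp add: simple_edge_def excess_edge_def)
  obtain e where e: "e \<in> walk_edges W" "v \<in> e" using incident_exists[OF v] by blast
  have t1: "1 \<le> tdeg (walk_edges W) v" using tdeg_pos[OF v] .
  have A: "wleaf W v \<longrightarrow> (\<exists>e\<in>walk_edges W. v \<in> e \<and> excess_edge W e)"
  proof
    assume l: "wleaf W v"
    show "\<exists>e\<in>walk_edges W. v \<in> e \<and> excess_edge W e"
    proof (cases "v = hd W")
      case True
      then have "excess_edge W e" using k l e unfolding kernel_walk_def by auto
      then show ?thesis using e by blast
    next
      case False
      then have "\<not> simple_edge W e" using k l e v unfolding kernel_walk_def by blast
      then show ?thesis using e ns by blast
    qed
  qed
  have B: "\<not> wleaf W v \<longrightarrow> 2 \<le> woutdeg W v \<or> (\<exists>e\<in>walk_edges W. v \<in> e \<and> excess_edge W e)"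
  proof
    assume l: "\<not> wleaf W v"
    then have t2: "2 \<le> tdeg (walk_edges W) v" using t1 v unfolding wleaf_def by simp
    show "2 \<le> woutdeg W v \<or> (\<exists>e\<in>walk_edges W. v \<in> e \<and> excess_edge W e)"
    proof (cases "v = hd W")
      case True then show ?thesis using t2 by (simp add: woutdeg_def)
    next
      case False
      show ?thesis
      proof (cases "tdeg (walk_edges W) v = 2")
        case True
        then obtain e' where "e' \<in> walk_edges W" "v \<in> e'" "\<not> simple_edge W e'"
          using k v False unfolding kernel_walk_def by blast
        then show ?thesis using ns by blast
      next
        case False2: False
        then have "2 \<le> woutdeg W v" using t2 False by (simp add: woutdeg_def)
        then show ?thesis by simp
      qed
    qed
  qed
  show ?thesis using A B by blast
qed


lemma img_eq: "{{x, y} |x b y. (x, b, y) \<in> S} = (\<lambda>(x, b, y). {x, y}) ` (S :: ('a \<times> bool \<times> 'a) set)"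
proof
  show "{{x, y} |x b y. (x, b, y) \<in> S} \<subseteq> (\<lambda>(x, b, y). {x, y}) ` S"
  proof
    fix e assume "e \<in> {{x, y} |x b y. (x, b, y) \<in> S}"
    then obtain x b y where h: "e = {x, y}" "(x, b, y) \<in> S" by blast
    show "e \<in> (\<lambda>(x, b, y). {x, y}) ` S" by (rule rev_image_eqI[OF h(2)]) (simp add: h(1))
  qed
  show "(\<lambda>(x, b, y). {x, y}) ` S \<subseteq> {{x, y} |x b y. (x, b, y) \<in> S}" by auto
qed

lemma dbl_ord: "{x, y} = {u, w} \<Longrightarrow> (x::nat) < y \<Longrightarrow> u < w \<Longrightarrow> x = u \<and> y = w"
  by (auto simp: doubleton_eq_iff)

lemma kids_lab_neq:
  assumes d: "distinct (labels (LNode v (p1 # p2 # r)))"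
  shows "lab (snd p1) \<noteq> lab (snd p2)"
proof
  assume h: "lab (snd p1) = lab (snd p2)"
  have dd: "distinct (labels (snd p1) @ (labels (snd p2) @ concat (map (\<lambda>p. labels (snd p)) r)))"
    using d by (simp only: labels.simps list.map concat.simps distinct.simps(2))
  then have dj: "set (labels (snd p1)) \<inter> set (labels (snd p2) @ concat (map (\<lambda>p. labels (snd p)) r)) = {}"
    by (simp only: distinct_append)
  have "lab (snd p2) \<in> set (labels (snd p2) @ concat (map (\<lambda>p. labels (snd p)) r))" by simp
  moreover have "lab (snd p2) \<in> set (labels (snd p1))" using h lab_in_labels[of "snd p1"] by simp
  ultimately show False using dj by (metis IntI empty_iff)
qed

lemma part2:
  fixes t :: ptree
  assumes ok: "ptree_ok t"
  shows "\<exists>m W lt. kernel_walk m W \<and> realizes W lt \<and> erase lt = t"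
proof -
  define m where "m = length (labels t)"
  define lt where "lt = relab 1 t"
  define Es where "Es = E lt"
  define W where "W = butlast (T lt)"
  have L: "labels lt = [1..<Suc m]" unfolding lt_def m_def using relab_labels(1)[of 1 t] by simp
  have dl: "distinct (labels lt)" using L by simp
  have setl: "set (labels lt) = {1..m}" using L by auto
  have m1: "1 \<le> m" using L lab_in_labels[of lt] by auto
  have lab1: "lab lt = 1" unfolding lt_def by (rule relab_lab)
  have er: "erase lt = t"
  proof -
    have i: "(\<lambda>_::unit. ()) = id" by auto
    show ?thesis unfolding erase_def lt_def relab_erase(1) i by (simp add: ltree.map_id)
  qed
  have okl: "ptree_ok lt" using ok er ptree_ok_map[of "\<lambda>_. ()" lt] unfolding erase_def by simp
  have mono: "mono_t lt" unfolding lt_def by (rule relab_mono(1))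
  obtain cs where ltc: "lt = LNode 1 cs" using lab1 by (cases lt) auto
  have csne: "cs \<noteq> []" using okl ltc by auto
  have Tne: "T lt \<noteq> []" "hd (T lt) = 1" "last (T lt) = 1" using T_props[of lt] lab1 by auto
  have Tlen: "2 \<le> length (T lt)"
  proof -
    obtain p ps where p: "cs = p # ps" using csne by (cases cs) auto
    have "T (snd p) \<noteq> []" using T_props by blast
    then show ?thesis using ltc p by (cases "T (snd p)") auto
  qed
  have lenW: "length W = length (T lt) - 1" by (simp add: W_def)
  have Wne: "W \<noteq> []" using lenW Tlen by auto
  have hdW: "hd W = 1"
  proof -
    have "hd W = W ! 0" using Wne by (simp add: hd_conv_nth)
    also have "\<dots> = T lt ! 0" unfolding W_def using Tlen by (simp add: nth_butlast)
    also have "\<dots> = 1" using Tne by (simp add: hd_conv_nth[symmetric])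
    finally show ?thesis .
  qed
  have WT: "W @ [hd W] = T lt"
    using append_butlast_last_id[OF Tne(1)] Tne(3) hdW unfolding W_def by simp
  have PE: "pairs (T lt) = Es" by (simp add: Es_def pairs_T)
  have we: "walk_edges W = set Es" using walk_facts(1)[OF Wne WT] PE by simp
  have tc: "\<And>e. trav_count W e = length (filter (\<lambda>x. x = e) Es)" using walk_facts(2)[OF Wne WT] PE by simp
  have ft: "\<And>e. first_trav W e = fidx Es e" using walk_facts(3)[OF Wne WT] PE by simp
  have setW: "set W = {1..m}"
  proof -
    have "set (T lt) = set W" using WT[symmetric] Wne by auto
    then show ?thesis using set_T[of lt] setl by simp
  qed
  have setE: "set Es = (\<lambda>(x, b, y). {x, y}) ` LE lt" unfolding Es_def by (rule set_E)
  have cnt: "\<And>x b y. (x, b, y) \<in> LE lt \<Longrightarrow> trav_count W {x, y} = (if b then 4 else 2)"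
    using count_LE[OF dl] tc unfolding Es_def by simp
  have ltxy: "\<And>x b y. (x, b, y) \<in> LE lt \<Longrightarrow> x < y" using LE_mono[OF mono] by blast
  have edge_in: "\<And>x b y. (x, b, y) \<in> LE lt \<Longrightarrow> {x, y} \<in> walk_edges W"
    using we setE by force
  have edge_from: "\<And>e. e \<in> walk_edges W \<Longrightarrow> \<exists>x b y. (x, b, y) \<in> LE lt \<and> e = {x, y}"
    using we setE by auto
  have exc: "\<And>x y. (x, True, y) \<in> LE lt \<Longrightarrow> excess_edge W {x, y}"
    using cnt edge_in by (simp add: excess_edge_def)
  have nsimp: "\<And>x y. (x, True, y) \<in> LE lt \<Longrightarrow> \<not> simple_edge W {x, y}"
    using cnt by (simp add: simple_edge_def)
  have uniqS: "\<And>x x' y. {x, y} \<in> walk_edges W \<Longrightarrow> {x', y} \<in> walk_edges W \<Longrightarrow> x < y \<Longrightarrow> x' < y \<Longrightarrow> x = x'"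
  proof -
    fix x x' y
    assume a: "{x, y} \<in> walk_edges W" "{x', y} \<in> walk_edges W" "x < y" "x' < y"
    obtain u b w where u: "(u, b, w) \<in> LE lt" "{x, y} = {u, w}" using edge_from[OF a(1)] by blast
    obtain u' b' w' where u': "(u', b', w') \<in> LE lt" "{x', y} = {u', w'}" using edge_from[OF a(2)] by blast
    have "x = u \<and> y = w" using dbl_ord[OF u(2) a(3) ltxy[OF u(1)]] .
    moreover have "x' = u' \<and> y = w'" using dbl_ord[OF u'(2) a(4) ltxy[OF u'(1)]] .
    ultimately show "x = x'" using LE_unique[OF dl] u(1) u'(1) by blast
  qed
  define R where "R = {(x, y). {x, y} \<in> walk_edges W}"
  have symR: "R\<inverse> = R" unfolding R_def by (auto simp: insert_commute)
  have conn1: "(1, u) \<in> R\<^sup>*" if u: "u \<in> {1..m}" for u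
  proof -
    have "u \<in> set (labels lt)" using u setl by simp
    from connected[OF this] have "(lab lt, u) \<in> {(x, y). {x, y} \<in> set (E lt)}\<^sup>*" .
    then show ?thesis unfolding R_def we Es_def lab1 .
  qed
  have conn: "\<And>u v. u \<in> {1..m} \<Longrightarrow> v \<in> {1..m} \<Longrightarrow> (u, v) \<in> R\<^sup>*"
  proof -
    fix u v assume "u \<in> {1..m}" "v \<in> {1..m}"
    then have "(1, u) \<in> R\<^sup>*" "(1, v) \<in> R\<^sup>*" using conn1 by auto
    then have "(u, 1) \<in> R\<^sup>*" using rtrancl_converseI[of 1 u R] symR by simp
    then show "(u, v) \<in> R\<^sup>*" using \<open>(1, v) \<in> R\<^sup>*\<close> by simp
  qed
  have tree: "is_tree {1..m} (walk_edges W)"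
    unfolding is_tree_def
  proof (intro conjI)
    show "finite {1..m}" by simp
    show "{1..m} \<noteq> {}" using m1 by simp
    show "\<forall>e\<in>walk_edges W. \<exists>u v. e = {u, v} \<and> u \<noteq> v \<and> u \<in> {1..m} \<and> v \<in> {1..m}"
    proof
      fix e assume "e \<in> walk_edges W"
      then obtain x b y where "(x, b, y) \<in> LE lt" "e = {x, y}" using edge_from by blast
      then show "\<exists>u v. e = {u, v} \<and> u \<noteq> v \<and> u \<in> {1..m} \<and> v \<in> {1..m}"
      proof -
        assume h: "(x, b, y) \<in> LE lt" "e = {x, y}"
        have "x < y" using ltxy[OF h(1)] .
        moreover have "x \<in> {1..m}" "y \<in> {1..m}" using LE_labels[OF h(1)] setl by auto
        ultimately show ?thesis using h(2) by blast
      qed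
    qed
    show "\<forall>u\<in>{1..m}. \<forall>v\<in>{1..m}. (u, v) \<in> {(x, y). {x, y} \<in> walk_edges W}\<^sup>*"
      using conn unfolding R_def by blast
    show "\<not> (\<exists>cs. 3 \<le> length cs \<and> distinct cs \<and> (\<forall>i<length cs. {cs ! i, cs ! (Suc i mod length cs)} \<in> walk_edges W))"
      by (rule acyclic_lemma) (rule uniqS)
  qed
  have tw: "tree_walk m W" unfolding tree_walk_def using Wne setW tree by simp
  have fin: "\<And>v. finite {e \<in> walk_edges W. v \<in> e}" using walk_edges_finite by simp
  have loc: "\<exists>x c ks. (x, c, v) \<in> LE lt \<and> sub_ok c (LNode v ks) \<and> distinct (labels (LNode v ks))
               \<and> (\<forall>p\<in>set ks. (v, fst p, lab (snd p)) \<in> LE lt)"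
    if v: "v \<in> set W" "v \<noteq> hd W" for v
  proof -
    have v1: "v \<in> set (labels lt)" using v(1) setW setl by simp
    have v2: "v \<noteq> lab lt" using v(2) hdW lab1 by simp
    obtain q where q: "q \<in> KS lt" "lab (snd q) = v" using KS_labels[OF v1] v2 by blast
    obtain ks where sq: "snd q = LNode v ks" using q(2) by (cases "snd q") auto
    have so: "sub_ok (fst q) (snd q)" using KS_ptree_ok[OF okl q(1)] .
    have pr: "(\<exists>x. (x, fst q, lab (snd q)) \<in> LE lt) \<and> LE (snd q) \<subseteq> LE lt \<and> distinct (labels (snd q))"
      using KS_props[OF q(1)] dl by blast
    have "\<forall>p\<in>set ks. (v, fst p, lab (snd p)) \<in> LE lt"
      using kid_LE[of _ "snd q"] sq pr by auto
    moreover obtain x where "(x, fst q, v) \<in> LE lt" using pr q(2) by blast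
    moreover have "sub_ok (fst q) (LNode v ks)" using so sq by simp
    moreover have "distinct (labels (LNode v ks))" using pr sq by simp
    ultimately show ?thesis by blast
  qed
  have K1: "\<forall>v\<in>set W. v \<noteq> hd W \<and> wleaf W v \<longrightarrow> \<not> (\<exists>e\<in>walk_edges W. v \<in> e \<and> simple_edge W e)"
  proof (intro ballI impI)
    fix v assume v: "v \<in> set W" "v \<noteq> hd W \<and> wleaf W v"
    obtain x c ks where l: "(x, c, v) \<in> LE lt" "sub_ok c (LNode v ks)" "distinct (labels (LNode v ks))"
      "\<forall>p\<in>set ks. (v, fst p, lab (snd p)) \<in> LE lt" using loc v by blast
    let ?I = "{e \<in> walk_edges W. v \<in> e}"
    have c1: "card ?I = 1" using v unfolding wleaf_def tdeg_def by simp
    have e0: "{x, v} \<in> ?I" using edge_in[OF l(1)] by simp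
    have ks: "ks = []"
    proof (rule ccontr)
      assume "ks \<noteq> []"
      then obtain p where p: "p \<in> set ks" by (cases ks) auto
      have e1: "{v, lab (snd p)} \<in> ?I" using edge_in l(4) p by auto
      have "x < v" "v < lab (snd p)" using ltxy l(1) l(4) p by blast+
      then have "{x, v} \<noteq> {v, lab (snd p)}" by (auto simp: doubleton_eq_iff)
      then have "2 \<le> card ?I" using card_ge2[OF fin e0 e1] by simp
      then show False using c1 by simp
    qed
    then have c: "c" using l(2) by simp
    obtain z where z: "?I = {z}" using c1 by (rule card_1_singletonE)
    have I: "?I = {{x, v}}" using z e0 by simp
    have ns: "\<not> simple_edge W {x, v}" using nsimp[of x v] l(1) c by simp
    show "\<not> (\<exists>e\<in>walk_edges W. v \<in> e \<and> simple_edge W e)"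
    proof
      assume "\<exists>e\<in>walk_edges W. v \<in> e \<and> simple_edge W e"
      then obtain e where "e \<in> ?I" "simple_edge W e" by blast
      then show False using I ns by simp
    qed
  qed
  have K3: "\<forall>v\<in>set W. v \<noteq> hd W \<and> tdeg (walk_edges W) v = 2 \<longrightarrow>
        \<not> (\<forall>e\<in>walk_edges W. v \<in> e \<longrightarrow> simple_edge W e)"
  proof (intro ballI impI notI)
    fix v assume v: "v \<in> set W" "v \<noteq> hd W \<and> tdeg (walk_edges W) v = 2"
      and allS: "\<forall>e\<in>walk_edges W. v \<in> e \<longrightarrow> simple_edge W e"
    obtain x c ks where l: "(x, c, v) \<in> LE lt" "sub_ok c (LNode v ks)" "distinct (labels (LNode v ks))"
      "\<forall>p\<in>set ks. (v, fst p, lab (snd p)) \<in> LE lt" using loc v by blast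
    let ?I = "{e \<in> walk_edges W. v \<in> e}"
    have c2: "card ?I = 2" using v unfolding tdeg_def by simp
    have e0: "{x, v} \<in> ?I" using edge_in[OF l(1)] by simp
    have notc: "\<not> c" using allS nsimp[of x v] l(1) e0 by auto
    have notb: "\<not> fst p" if "p \<in> set ks" for p
    proof
      assume "fst p"
      moreover have "(v, fst p, lab (snd p)) \<in> LE lt" using l(4) that by blast
      ultimately have "(v, True, lab (snd p)) \<in> LE lt" by simp
      then show False using allS nsimp edge_in by blast
    qed
    show False
    proof (cases ks)
      case Nil then show False using l(2) notc by simp
    next
      case (Cons p1 r)
      show False
      proof (cases r)
        case Nil then show False using l(2) notc notb Cons by simp
      next
        case (Cons p2 r')
        have ks2: "ks = p1 # p2 # r'" using \<open>ks = p1 # r\<close> Cons by simp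
        have l1: "(v, fst p1, lab (snd p1)) \<in> LE lt" using l(4) ks2 by simp
        have l2: "(v, fst p2, lab (snd p2)) \<in> LE lt" using l(4) ks2 by simp
        have e1: "{v, lab (snd p1)} \<in> ?I" using edge_in[OF l1] by simp
        have e2: "{v, lab (snd p2)} \<in> ?I" using edge_in[OF l2] by simp
        have o: "x < v" "v < lab (snd p1)" "v < lab (snd p2)"
          using ltxy[OF l(1)] ltxy[OF l1] ltxy[OF l2] by simp_all
        have d12: "lab (snd p1) \<noteq> lab (snd p2)"
          using l(3) unfolding ks2 by (rule kids_lab_neq)
        have "3 \<le> card ?I"
          by (rule card_ge3[OF fin e0 e1 e2]) (use o d12 in \<open>auto simp: doubleton_eq_iff\<close>)
        then show False using c2 by simp
      qed
    qed
  qed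
  have K2: "wleaf W (hd W) \<longrightarrow> (\<forall>e\<in>walk_edges W. hd W \<in> e \<longrightarrow> excess_edge W e)"
  proof (intro impI ballI)
    fix e assume lf: "wleaf W (hd W)" and e: "e \<in> walk_edges W" "hd W \<in> e"
    let ?I = "{e \<in> walk_edges W. 1 \<in> e}"
    have c1: "card ?I = 1" using lf hdW unfolding wleaf_def tdeg_def by simp
    have kl: "\<forall>p\<in>set cs. (1, fst p, lab (snd p)) \<in> LE lt" using kid_LE[of _ lt] ltc by auto
    obtain p1 r where cs: "cs = p1 # r" using csne by (cases cs) auto
    have e1: "{1, lab (snd p1)} \<in> ?I" using edge_in kl cs by auto
    have r: "r = []"
    proof (rule ccontr)
      assume "r \<noteq> []"
      then obtain p2 r' where r: "r = p2 # r'" by (cases r) auto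
      have k2: "(1, fst p2, lab (snd p2)) \<in> LE lt" using kl cs r by simp
      have k1: "(1, fst p1, lab (snd p1)) \<in> LE lt" using kl cs by simp
      have e2: "{1, lab (snd p2)} \<in> ?I" using edge_in[OF k2] by simp
      have d12: "lab (snd p1) \<noteq> lab (snd p2)"
        using dl unfolding ltc cs r by (rule kids_lab_neq)
      have o: "1 < lab (snd p1)" using ltxy[OF k1] .
      have "{1, lab (snd p1)} \<noteq> {1, lab (snd p2)}" using d12 o by (auto simp: doubleton_eq_iff)
      then have "2 \<le> card ?I" using card_ge2[OF fin e1 e2] by simp
      then show False using c1 by simp
    qed
    have b: "fst p1" using okl ltc cs r by simp
    obtain z where z: "?I = {z}" using c1 by (rule card_1_singletonE)
    have I: "?I = {{1, lab (snd p1)}}" using z e1 by simp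
    have "e \<in> ?I" using e hdW by simp
    then have "e \<in> {{1, lab (snd p1)}}" unfolding I .
    then have ee: "e = {1, lab (snd p1)}" by (rule singletonD)
    have "(1, True, lab (snd p1)) \<in> LE lt" using kl cs b by simp
    then show "excess_edge W e" unfolding ee by (rule exc)
  qed
  have kw: "kernel_walk m W" unfolding kernel_walk_def by (intro conjI tw K1 K2 K3)
  have rz: "realizes W lt" unfolding realizes_def
  proof (intro conjI)
    show "lab lt = hd W" using lab1 hdW by simp
    show "distinct (labels lt)" by (rule dl)
    show "set (labels lt) = set W" using setl setW by simp
    show "{{x, y} |x b y. (x, b, y) \<in> ledges lt} = walk_edges W"
    proof -
      have "{{x, y} |x b y. (x, b, y) \<in> LE lt} = (\<lambda>(x, b, y). {x, y}) ` LE lt" by (rule img_eq)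
      then show ?thesis unfolding LE_ledges[symmetric] we setE .
    qed
    show "\<forall>(x, b, y)\<in>ledges lt. b = excess_edge W {x, y}"
      unfolding LE_ledges[symmetric]
    proof (clarify)
      fix x b y assume h: "(x, b, y) \<in> LE lt"
      show "b = excess_edge W {x, y}" using cnt[OF h] edge_in[OF h] by (cases b) (simp_all add: excess_edge_def)
    qed
    show "\<forall>s\<in>subtrees lt. sorted_wrt (<) (map (\<lambda>p. first_trav W {lab s, lab (snd p)}) (kids s))"
    proof
      fix s assume s: "s \<in> subtrees lt"
      have "sorted_wrt (<) (map (\<lambda>p. fidx ([] @ E lt @ []) {lab s, lab (snd p)}) (kids s))"
        by (rule sort_sub[OF dl _ s]) simp
      then show "sorted_wrt (<) (map (\<lambda>p. first_trav W {lab s, lab (snd p)}) (kids s))"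
        unfolding ft Es_def by simp
    qed
  qed
  show ?thesis by (rule exI[of _ m], rule exI[of _ W], rule exI[of _ lt]) (intro conjI kw rz er)
qed

theorem lemma1:
  shows "(\<forall>m W. kernel_walk m W \<longrightarrow>
            (\<forall>v\<in>set W. wleaf W v \<longrightarrow>
               (\<exists>e\<in>walk_edges W. v \<in> e \<and> excess_edge W e)) \<and>
            (\<forall>v\<in>set W. \<not> wleaf W v \<longrightarrow>
               2 \<le> woutdeg W v \<or> (\<exists>e\<in>walk_edges W. v \<in> e \<and> excess_edge W e)))
       \<and> (\<forall>t :: ptree. ptree_ok t \<longrightarrow>
            (\<exists>m W lt. kernel_walk m W \<and> realizes W lt \<and> erase lt = t))"
proof (intro conjI allI impI ballI)
  fix m W v assume "kernel_walk m W" "v \<in> set W" "wleaf W v"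
  then show "\<exists>e\<in>walk_edges W. v \<in> e \<and> excess_edge W e" using part1 by blast
next
  fix m W v assume "kernel_walk m W" "v \<in> set W" "\<not> wleaf W v"
  then show "2 \<le> woutdeg W v \<or> (\<exists>e\<in>walk_edges W. v \<in> e \<and> excess_edge W e)" using part1 by blast
next
  fix t :: ptree assume "ptree_ok t"
  then show "\<exists>m W lt. kernel_walk m W \<and> realizes W lt \<and> erase lt = t" by (rule part2)
qed


end
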